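(* Let $X$ be a topological space in which every open set is a union of countably many clopen sets. The following are equivalent: (1) for every Borel function $\Psi:X\to\mathbb{N}^{\mathbb{N}}$, $\Psi[X]$ is a bounded subset of $\mathbb{N}^{\mathbb{N}}$; (2) for every continuous function $\Psi:X\to\overline{\mathbb{N}}^{\mathbb{N}}$, $\Psi[X]$ is a bounded subset of $\overline{\mathbb{N}}^{\mathbb{N}}$.
   Context: $\overline{\mathbb{N}}=\mathbb{N}\cup\{\infty\}$ is the one-point compactification of $\mathbb{N}$, and $\overline{\mathbb{N}}^{\mathbb{N}}$ has the product topology. A set $Y\subseteq\overline{\mathbb{N}}^{\mathbb{N}}$ is bounded if there is $g\in\mathbb{N}^{\mathbb{N}}$ such that for each $f\in Y$ and all but finitely many $n$, $f(n)<\infty$ implies $f(n)\le g(n)$. (For $Y\subseteq\mathbb{N}^{\mathbb{N}}$ this is the usual notion: each $f\in Y$ satisfies $f(n)\le g(n)$ for all but finitely many $n$.) *)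

theory Defs
  imports "HOL-Analysis.Analysis"
begin

definition baire_bounded :: "(nat \<Rightarrow> nat) set \<Rightarrow> bool" where
  "baire_bounded Y \<longleftrightarrow> (\<exists>g::nat \<Rightarrow> nat. \<forall>f\<in>Y. \<forall>\<^sub>F n in sequentially. f n \<le> g n)"

text \<open>Boundedness in (N \<union> {\<infinity>})^N, where enat carries its order topology,
  i.e. the one-point compactification of the discrete N.\<close>
definition enat_seq_bounded :: "(nat \<Rightarrow> enat) set \<Rightarrow> bool" where
  "enat_seq_bounded Y \<longleftrightarrow>
     (\<exists>g::nat \<Rightarrow> nat. \<forall>f\<in>Y. \<forall>\<^sub>F n in sequentially. f n < \<infinity> \<longrightarrow> f n \<le> enat (g n))"

definition open_countable_clopen_union :: "'a::topological_space itself \<Rightarrow> bool" where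
  "open_countable_clopen_union _ \<longleftrightarrow>
     (\<forall>U::'a set. open U \<longrightarrow>
        (\<exists>\<C>. countable \<C> \<and> (\<forall>C\<in>\<C>. open C \<and> closed C) \<and> U = \<Union>\<C>))"

end

theory Submission
  imports Defs
begin

lemma clopen_seq:
  assumes "open_countable_clopen_union TYPE('a::topological_space)" "open (U::'a set)"
  shows "\<exists>C::nat \<Rightarrow> 'a set. (\<forall>k. open (C k) \<and> closed (C k)) \<and> U = (\<Union>k. C k)"
proof -
  obtain \<C> where c: "countable \<C>" "\<forall>C\<in>\<C>. open C \<and> closed C" "U = \<Union>\<C>"
    using assms unfolding open_countable_clopen_union_def by blast
  show ?thesis
  proof (cases "\<C> = {}")
    case True
    thus ?thesis using c by (intro exI[of _ "\<lambda>_. {}"]) auto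
  next
    case False
    then have r: "range (from_nat_into \<C>) = \<C>" using c(1) by (simp add: range_from_nat_into)
    have "\<forall>k. from_nat_into \<C> k \<in> \<C>" using False by (simp add: from_nat_into)
    thus ?thesis using c r by (intro exI[of _ "from_nat_into \<C>"]) auto
  qed
qed

lemma good:
  fixes a :: "nat \<Rightarrow> nat \<Rightarrow> 'a::topological_space set"
  assumes B: "\<forall>\<Psi> :: 'a \<Rightarrow> (nat \<Rightarrow> enat). continuous_on UNIV \<Psi> \<longrightarrow> enat_seq_bounded (range \<Psi>)"
    and clo: "\<And>n k. open (a n k) \<and> closed (a n k)"
  shows "\<exists>g::nat\<Rightarrow>nat. \<forall>x. \<forall>\<^sub>F n in sequentially. x \<in> (\<Union>k. a n k) \<longrightarrow> (\<exists>k\<le>g n. x \<in> a n k)"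
proof -
  define \<Psi> where "\<Psi> x n = (if \<exists>k. x \<in> a n k then enat (LEAST k. x \<in> a n k) else \<infinity>)" for x n
  have lt: "\<Psi> x n < enat m \<longleftrightarrow> (\<exists>k<m. x \<in> a n k)" for x n m
  proof (cases "\<exists>k. x \<in> a n k")
    case True
    then have L: "x \<in> a n (LEAST k. x \<in> a n k)" by (rule LeastI_ex)
    have "\<And>k. x \<in> a n k \<Longrightarrow> (LEAST k. x \<in> a n k) \<le> k" by (rule Least_le)
    then show ?thesis using True L unfolding \<Psi>_def by (auto intro: le_less_trans)
  next
    case False thus ?thesis unfolding \<Psi>_def by auto
  qed
  have gt: "enat m < \<Psi> x n \<longleftrightarrow> \<not> (\<exists>k\<le>m. x \<in> a n k)" for x n m
  proof (cases "\<exists>k. x \<in> a n k")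
    case True
    then have L: "x \<in> a n (LEAST k. x \<in> a n k)" by (rule LeastI_ex)
    have "\<And>k. x \<in> a n k \<Longrightarrow> (LEAST k. x \<in> a n k) \<le> k" by (rule Least_le)
    then have "m < (LEAST k. x \<in> a n k) \<longleftrightarrow> \<not> (\<exists>k\<le>m. x \<in> a n k)"
      using L by (meson le_trans not_le)
    then show ?thesis using True unfolding \<Psi>_def by simp
  next
    case False thus ?thesis unfolding \<Psi>_def by auto
  qed
  have ltinf: "\<Psi> x n < \<infinity> \<longleftrightarrow> (\<exists>k. x \<in> a n k)" for x n
    unfolding \<Psi>_def by auto
  have cn: "continuous_on UNIV (\<lambda>x. \<Psi> x n)" for n
  proof (rule continuous_on_generate_topology[OF open_generated_order], safe)
    fix b :: enat
    show "\<exists>C. open C \<and> C \<inter> UNIV = (\<lambda>x. \<Psi> x n) -` {..<b} \<inter> UNIV"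
    proof (cases b)
      case (enat m)
      have "open (\<Union>k\<in>{..<m}. a n k)" using clo by auto
      then show ?thesis using lt enat by (intro exI[of _ "\<Union>k\<in>{..<m}. a n k"]) auto
    next
      case infinity
      have "open (\<Union>k. a n k)" using clo by auto
      then show ?thesis using ltinf infinity by (intro exI[of _ "\<Union>k. a n k"]) auto
    qed
    show "\<exists>C. open C \<and> C \<inter> UNIV = (\<lambda>x. \<Psi> x n) -` {b<..} \<inter> UNIV"
    proof (cases b)
      case (enat m)
      have "closed (\<Union>k\<in>{..m}. a n k)" using clo by (intro closed_UN) auto
      then have "open (- (\<Union>k\<in>{..m}. a n k))" by (rule open_Compl)
      then show ?thesis using gt enat by (intro exI[of _ "- (\<Union>k\<in>{..m}. a n k)"]) auto
    next
      case infinity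
      then show ?thesis by (intro exI[of _ "{}"]) auto
    qed
  qed
  have "continuous_on UNIV \<Psi>"
    by (rule continuous_on_coordinatewise_then_product) (rule cn)
  then obtain g where g: "\<forall>f\<in>range \<Psi>. \<forall>\<^sub>F n in sequentially. f n < \<infinity> \<longrightarrow> f n \<le> enat (g n)"
    using B unfolding enat_seq_bounded_def by blast
  have "\<forall>x. \<forall>\<^sub>F n in sequentially. x \<in> (\<Union>k. a n k) \<longrightarrow> (\<exists>k\<le>g n. x \<in> a n k)"
  proof
    fix x
    show "\<forall>\<^sub>F n in sequentially. x \<in> (\<Union>k. a n k) \<longrightarrow> (\<exists>k\<le>g n. x \<in> a n k)"
      using g[rule_format, OF rangeI[of _ x]]
    proof (rule eventually_mono)
      fix n assume h: "\<Psi> x n < \<infinity> \<longrightarrow> \<Psi> x n \<le> enat (g n)"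
      show "x \<in> (\<Union>k. a n k) \<longrightarrow> (\<exists>k\<le>g n. x \<in> a n k)"
      proof
        assume "x \<in> (\<Union>k. a n k)"
        then have "\<Psi> x n < \<infinity>" using ltinf by auto
        then have "\<Psi> x n \<le> enat (g n)" using h by simp
        then have "\<Psi> x n < enat (Suc (g n))"
          by (rule le_less_trans) simp
        then show "\<exists>k\<le>g n. x \<in> a n k" using lt by (auto simp: less_Suc_eq_le)
      qed
    qed
  qed
  then show ?thesis by blast
qed

lemma Gdelta_Fsigma:
  fixes U :: "nat \<Rightarrow> 'a::topological_space set"
  assumes H: "open_countable_clopen_union TYPE('a)"
    and B: "\<forall>\<Psi> :: 'a \<Rightarrow> (nat \<Rightarrow> enat). continuous_on UNIV \<Psi> \<longrightarrow> enat_seq_bounded (range \<Psi>)"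
    and op: "\<And>n. open (U n)"
  shows "\<exists>F::nat \<Rightarrow> 'a set. (\<forall>i. closed (F i)) \<and> (\<Inter>n. U n) = (\<Union>i. F i)"
proof -
  have exC: "\<forall>n. \<exists>C::nat \<Rightarrow> 'a set. (\<forall>k. open (C k) \<and> closed (C k)) \<and> U n = (\<Union>k. C k)"
    using clopen_seq[OF H op] by blast
  then obtain C :: "nat \<Rightarrow> nat \<Rightarrow> 'a set" where C: "\<And>n. (\<forall>k. open (C n k) \<and> closed (C n k)) \<and> U n = (\<Union>k. C n k)"
    using choice[OF exC] by blast
  obtain g where g: "\<forall>x. \<forall>\<^sub>F n in sequentially. x \<in> (\<Union>k. C n k) \<longrightarrow> (\<exists>k\<le>g n. x \<in> C n k)"
    using good[OF B, of C] C by blast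
  define D where "D n m = (\<Union>k\<in>{..m}. C n k)" for n m
  define F2 where "F2 N m = (\<Inter>n. D n (if n < N then m else g n))" for N m
  define F where "F i = F2 (fst (prod_decode i)) (snd (prod_decode i))" for i
  have cl: "closed (F i)" for i
  proof -
    have "closed (D n m)" for n m
      unfolding D_def using C by (intro closed_UN) auto
    then show ?thesis unfolding F_def F2_def by (intro closed_INT) auto
  qed
  have DU: "D n m \<subseteq> U n" for n m unfolding D_def using C[of n] by blast
  have sub: "F i \<subseteq> (\<Inter>n. U n)" for i
  proof
    fix x assume "x \<in> F i"
    then have "\<forall>n. \<exists>m. x \<in> D n m" unfolding F_def F2_def by blast
    then show "x \<in> (\<Inter>n. U n)" using DU by blast
  qed
  have sup: "x \<in> (\<Union>i. F i)" if x: "x \<in> (\<Inter>n. U n)" for x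
  proof -
    obtain N where N: "\<And>n. n \<ge> N \<Longrightarrow> x \<in> (\<Union>k. C n k) \<longrightarrow> (\<exists>k\<le>g n. x \<in> C n k)"
      using g[rule_format, of x] unfolding eventually_sequentially by blast
    have ex: "\<exists>m. \<forall>n<M. \<exists>k\<le>m. x \<in> C n k" for M
    proof (induction M)
      case 0 show ?case by simp
    next
      case (Suc M)
      then obtain m where m: "\<forall>n<M. \<exists>k\<le>m. x \<in> C n k" by blast
      obtain k where k: "x \<in> C M k" using x C by blast
      have "\<forall>n<Suc M. \<exists>k'\<le>max m k. x \<in> C n k'"
      proof (intro allI impI)
        fix n assume "n < Suc M"
        then consider "n < M" | "n = M" by linarith
        then show "\<exists>k'\<le>max m k. x \<in> C n k'"
        proof cases
          case 1 then obtain k' where "k' \<le> m" "x \<in> C n k'" using m by blast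
          then show ?thesis by (intro exI[of _ k']) auto
        next
          case 2 then show ?thesis using k by (intro exI[of _ k]) auto
        qed
      qed
      then show ?case by blast
    qed
    then obtain m where m: "\<forall>n<N. \<exists>k\<le>m. x \<in> C n k" by blast
    have "x \<in> F2 N m"
      unfolding F2_def D_def
    proof
      fix n
      show "x \<in> (\<Union>k\<in>{..if n < N then m else g n}. C n k)"
      proof (cases "n < N")
        case True then show ?thesis using m by auto
      next
        case False
        then have "x \<in> (\<Union>k. C n k)" using x C[of n] by blast
        then have "\<exists>k\<le>g n. x \<in> C n k" using N[of n] False by simp
        then show ?thesis using False by auto
      qed
    qed
    then have "x \<in> F (prod_encode (N, m))" unfolding F_def by simp
    then show ?thesis by blast
  qed
  have "(\<Inter>n. U n) = (\<Union>i. F i)"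
  proof
    show "(\<Inter>n. U n) \<subseteq> (\<Union>i. F i)" using sup by blast
    show "(\<Union>i. F i) \<subseteq> (\<Inter>n. U n)" using sub by blast
  qed
  then show ?thesis using cl by blast
qed

definition FS :: "'a::topological_space set \<Rightarrow> bool" where
  "FS S \<longleftrightarrow> (\<exists>F::nat \<Rightarrow> 'a set. (\<forall>i. closed (F i)) \<and> S = (\<Union>i. F i))"

lemma borel_FS:
  fixes S :: "'a::topological_space set"
  assumes H: "open_countable_clopen_union TYPE('a)"
    and B: "\<forall>\<Psi> :: 'a \<Rightarrow> (nat \<Rightarrow> enat). continuous_on UNIV \<Psi> \<longrightarrow> enat_seq_bounded (range \<Psi>)"
    and S: "S \<in> sets borel"
  shows "FS S"
proof -
  have "S \<in> sigma_sets UNIV {S. open S}" using S by (simp add: sets_borel)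
  then show ?thesis
  proof (induction rule: sigma_sets.induct)
    case (Basic a)
    then have "open a" by simp
    then obtain C :: "nat \<Rightarrow> 'a set" where C: "(\<forall>k. open (C k) \<and> closed (C k)) \<and> a = (\<Union>k. C k)"
      using clopen_seq[OF H] by blast
    then show ?case unfolding FS_def by (intro exI[of _ C]) simp
  next
    case Empty
    show ?case unfolding FS_def by (intro exI[of _ "\<lambda>_. {}"]) auto
  next
    case (Compl a)
    then obtain F :: "nat \<Rightarrow> 'a set" where F: "\<forall>i. closed (F i)" "a = (\<Union>i. F i)"
      unfolding FS_def by blast
    have e: "UNIV - a = (\<Inter>i. - F i)" using F(2) by blast
    have "\<And>i. open (- F i)" using F(1) by (simp add: open_Compl)
    then obtain G :: "nat \<Rightarrow> 'a set" where G: "\<forall>i. closed (G i)" "(\<Inter>i. - F i) = (\<Union>i. G i)"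
      using Gdelta_Fsigma[OF H B, of "\<lambda>i. - F i"] by blast
    show ?case unfolding FS_def
      by (intro exI[of _ G] conjI G(1)) (simp only: e G(2))
  next
    case (Union A)
    then have exF: "\<forall>i. \<exists>F::nat \<Rightarrow> 'a set. (\<forall>j. closed (F j)) \<and> A i = (\<Union>j. F j)"
      unfolding FS_def by blast
    then obtain F :: "nat \<Rightarrow> nat \<Rightarrow> 'a set" where F: "\<And>i. (\<forall>j. closed (F i j)) \<and> A i = (\<Union>j. F i j)"
      using choice[OF exF] by blast
    define G where "G p = F (fst (prod_decode p)) (snd (prod_decode p))" for p
    have "(\<Union>i. A i) = (\<Union>p. G p)"
    proof
      show "(\<Union>i. A i) \<subseteq> (\<Union>p. G p)"
      proof
        fix x assume "x \<in> (\<Union>i. A i)"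
        then obtain i j where "x \<in> F i j" using F by blast
        then have "x \<in> G (prod_encode (i, j))" unfolding G_def by simp
        then show "x \<in> (\<Union>p. G p)" by blast
      qed
      show "(\<Union>p. G p) \<subseteq> (\<Union>i. A i)"
      proof
        fix x assume "x \<in> (\<Union>p. G p)"
        then obtain p where "x \<in> G p" by blast
        then have "x \<in> A (fst (prod_decode p))" unfolding G_def using F by blast
        then show "x \<in> (\<Union>i. A i)" by blast
      qed
    qed
    moreover have "\<forall>p. closed (G p)" unfolding G_def using F by blast
    ultimately show ?case unfolding FS_def by (intro exI[of _ G]) simp
  qed
qed

lemma closed_good:
  fixes G :: "nat \<Rightarrow> nat \<Rightarrow> 'a::topological_space set"
  assumes H: "open_countable_clopen_union TYPE('a)"
    and B: "\<forall>\<Psi> :: 'a \<Rightarrow> (nat \<Rightarrow> enat). continuous_on UNIV \<Psi> \<longrightarrow> enat_seq_bounded (range \<Psi>)"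
    and cl: "\<And>n r. closed (G n r)"
    and cov: "\<And>x n. \<exists>r. x \<in> G n r"
  shows "\<exists>g::nat \<Rightarrow> nat. \<forall>x. \<forall>\<^sub>F n in sequentially. \<exists>r\<le>g n. x \<in> G n r"
proof -
  have exE: "\<forall>p. \<exists>E::nat \<Rightarrow> 'a set. (\<forall>l. open (E l) \<and> closed (E l)) \<and> - G (fst p) (snd p) = (\<Union>l. E l)"
    by (intro allI clopen_seq[OF H] open_Compl cl)
  then obtain E0 :: "nat \<times> nat \<Rightarrow> nat \<Rightarrow> 'a set" where E0: "\<forall>p. (\<forall>l. open (E0 p l) \<and> closed (E0 p l)) \<and> - G (fst p) (snd p) = (\<Union>l. E0 p l)"
    using choice[OF exE] by blast
  define E where "E n r = E0 (n, r)" for n r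
  have E: "(\<forall>l. open (E n r l) \<and> closed (E n r l)) \<and> - G n r = (\<Union>l. E n r l)" for n r
    using E0[rule_format, of "(n, r)"] unfolding E_def by simp
  define a where "a q l = E (fst (prod_decode q)) (snd (prod_decode q)) l" for q l
  obtain h where h: "\<forall>x. \<forall>\<^sub>F q in sequentially. x \<in> (\<Union>l. a q l) \<longrightarrow> (\<exists>l\<le>h q. x \<in> a q l)"
    using good[OF B, of a] E unfolding a_def by blast
  define D where "D n r = (\<Inter>l\<in>{..h (prod_encode (n, r))}. - E n r l)" for n r
  have Dclo: "open (D n r) \<and> closed (D n r)" for n r
  proof
    show "open (D n r)" unfolding D_def using E by (intro open_INT ballI open_Compl) auto
    show "closed (D n r)" unfolding D_def using E by (intro closed_INT ballI closed_Compl) auto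
  qed
  have GD: "G n r \<subseteq> D n r" for n r unfolding D_def using E[of n r] by blast
  obtain g where g: "\<forall>x. \<forall>\<^sub>F n in sequentially. x \<in> (\<Union>r. D n r) \<longrightarrow> (\<exists>r\<le>g n. x \<in> D n r)"
    using good[OF B, of D] Dclo by blast
  have "\<forall>\<^sub>F n in sequentially. \<exists>r\<le>g n. x \<in> G n r" for x
  proof -
    obtain Q where Q: "\<And>q. q \<ge> Q \<Longrightarrow> x \<in> (\<Union>l. a q l) \<longrightarrow> (\<exists>l\<le>h q. x \<in> a q l)"
      using h[rule_format, of x] unfolding eventually_sequentially by blast
    obtain N where N: "\<And>n. n \<ge> N \<Longrightarrow> x \<in> (\<Union>r. D n r) \<longrightarrow> (\<exists>r\<le>g n. x \<in> D n r)"
      using g[rule_format, of x] unfolding eventually_sequentially by blast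
    have "\<exists>r\<le>g n. x \<in> G n r" if n: "n \<ge> max N Q" for n
    proof -
      obtain r0 where "x \<in> G n r0" using cov by blast
      then have "x \<in> (\<Union>r. D n r)" using GD by blast
      then obtain r where r: "r \<le> g n" "x \<in> D n r" using N[of n] n by auto
      have "x \<in> G n r"
      proof (rule ccontr)
        assume "x \<notin> G n r"
        then have "x \<in> (\<Union>l. E n r l)" using E[of n r] by blast
        then have xa: "x \<in> (\<Union>l. a (prod_encode (n, r)) l)" unfolding a_def by simp
        have "prod_encode (n, r) \<ge> Q" using n le_prod_encode_1[of n r] by linarith
        then obtain l where "l \<le> h (prod_encode (n, r))" "x \<in> E n r l"
          using Q[of "prod_encode (n, r)"] xa unfolding a_def by auto
        then show False using r(2) unfolding D_def by blast
      qed
      then show ?thesis using r by blast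
    qed
    then show ?thesis unfolding eventually_sequentially by blast
  qed
  then show ?thesis by blast
qed


theorem mainTheorem17:
  assumes "open_countable_clopen_union TYPE('a::topological_space)"
  shows "(\<forall>\<Psi> :: 'a \<Rightarrow> (nat \<Rightarrow> nat). \<Psi> \<in> borel_measurable borel \<longrightarrow> baire_bounded (range \<Psi>))
     \<longleftrightarrow> (\<forall>\<Psi> :: 'a \<Rightarrow> (nat \<Rightarrow> enat). continuous_on UNIV \<Psi> \<longrightarrow> enat_seq_bounded (range \<Psi>))"
proof
  assume A: "\<forall>\<Psi> :: 'a \<Rightarrow> (nat \<Rightarrow> nat). \<Psi> \<in> borel_measurable borel \<longrightarrow> baire_bounded (range \<Psi>)"
  show "\<forall>\<Psi> :: 'a \<Rightarrow> (nat \<Rightarrow> enat). continuous_on UNIV \<Psi> \<longrightarrow> enat_seq_bounded (range \<Psi>)"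
  proof (intro allI impI)
    fix \<Psi> :: "'a \<Rightarrow> nat \<Rightarrow> enat" assume c: "continuous_on UNIV \<Psi>"
    define h :: "enat \<Rightarrow> nat" where "h e = (case e of enat k \<Rightarrow> k | \<infinity> \<Rightarrow> 0)" for e
    define \<Phi> where "\<Phi> x n = h (\<Psi> x n)" for x n
    have hm: "h \<in> borel_measurable borel"
      using borel_measurable_count_space measurable_cong_sets sets_borel_eq_count_space by blast
    have "(\<lambda>x. \<Psi> x n) \<in> borel_measurable borel" for n
      by (rule borel_measurable_continuous_onI) (rule continuous_on_product_then_coordinatewise[OF c])
    then have "(\<lambda>x. \<Phi> x n) \<in> borel_measurable borel" for n
      unfolding \<Phi>_def using hm by (rule measurable_compose)
    then have "\<Phi> \<in> borel_measurable borel" by (rule measurable_coordinatewise_then_product)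
    then obtain g where g: "\<forall>f\<in>range \<Phi>. \<forall>\<^sub>F n in sequentially. f n \<le> g n"
      using A unfolding baire_bounded_def by blast
    show "enat_seq_bounded (range \<Psi>)" unfolding enat_seq_bounded_def
    proof (intro exI[of _ g] ballI)
      fix f assume "f \<in> range \<Psi>"
      then obtain x where f: "f = \<Psi> x" by blast
      show "\<forall>\<^sub>F n in sequentially. f n < \<infinity> \<longrightarrow> f n \<le> enat (g n)"
        using g[rule_format, OF rangeI[of \<Phi> x]]
      proof (rule eventually_mono)
        fix n assume "\<Phi> x n \<le> g n"
        then show "f n < \<infinity> \<longrightarrow> f n \<le> enat (g n)"
          unfolding f \<Phi>_def h_def by (cases "\<Psi> x n") auto
      qed
    qed
  qed
next
  assume B: "\<forall>\<Psi> :: 'a \<Rightarrow> (nat \<Rightarrow> enat). continuous_on UNIV \<Psi> \<longrightarrow> enat_seq_bounded (range \<Psi>)"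
  show "\<forall>\<Psi> :: 'a \<Rightarrow> (nat \<Rightarrow> nat). \<Psi> \<in> borel_measurable borel \<longrightarrow> baire_bounded (range \<Psi>)"
  proof (intro allI impI)
    fix \<Psi> :: "'a \<Rightarrow> nat \<Rightarrow> nat" assume m: "\<Psi> \<in> borel_measurable borel"
    have Am: "{x. \<Psi> x n = j} \<in> sets borel" for n j
    proof -
      have oj: "open {j::nat}"
      proof (cases j)
        case 0 then have "{j} = {..<1::nat}" by auto
        then show ?thesis by simp
      next
        case (Suc i) then have "{j} = {i<..<Suc j}" by auto
        then show ?thesis by simp
      qed
      have "{f::nat\<Rightarrow>nat. f n = j} = (\<lambda>f. f n) -` {j}" by auto
      also have "open \<dots>" by (rule open_vimage[OF oj continuous_on_product_coordinates])
      finally have "{f::nat\<Rightarrow>nat. f n = j} \<in> sets borel" by simp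
      then have "\<Psi> -` {f. f n = j} \<inter> space borel \<in> sets borel" by (rule measurable_sets[OF m])
      then show ?thesis by (simp add: vimage_def)
    qed
    have exF: "\<forall>p. \<exists>F::nat \<Rightarrow> 'a set. (\<forall>i. closed (F i)) \<and> {x. \<Psi> x (fst p) = snd p} = (\<Union>i. F i)"
    proof
      fix p :: "nat \<times> nat"
      have "FS {x. \<Psi> x (fst p) = snd p}" by (rule borel_FS[OF assms B Am])
      then show "\<exists>F::nat \<Rightarrow> 'a set. (\<forall>i. closed (F i)) \<and> {x. \<Psi> x (fst p) = snd p} = (\<Union>i. F i)"
        unfolding FS_def by blast
    qed
    then obtain F0 :: "nat \<times> nat \<Rightarrow> nat \<Rightarrow> 'a set" where
      F0: "\<forall>p. (\<forall>i. closed (F0 p i)) \<and> {x. \<Psi> x (fst p) = snd p} = (\<Union>i. F0 p i)"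
      using choice[OF exF] by blast
    define G where "G n r = F0 (n, fst (prod_decode r)) (snd (prod_decode r))" for n r
    have Gcl: "closed (G n r)" for n r unfolding G_def using F0 by blast
    have GA: "x \<in> G n r \<Longrightarrow> \<Psi> x n = fst (prod_decode r)" for x n r
    proof -
      assume "x \<in> G n r"
      then have "x \<in> {x. \<Psi> x (fst (n, fst (prod_decode r))) = snd (n, fst (prod_decode r))}"
        unfolding G_def using F0[rule_format, of "(n, fst (prod_decode r))"] by blast
      then show ?thesis by simp
    qed
    have cov: "\<exists>r. x \<in> G n r" for x n
    proof -
      have "x \<in> {y. \<Psi> y (fst (n, \<Psi> x n)) = snd (n, \<Psi> x n)}" by simp
      then obtain i where "x \<in> F0 (n, \<Psi> x n) i" using F0[rule_format, of "(n, \<Psi> x n)"] by blast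
      then have "x \<in> G n (prod_encode (\<Psi> x n, i))" unfolding G_def by simp
      then show ?thesis by blast
    qed
    obtain g where g: "\<forall>x. \<forall>\<^sub>F n in sequentially. \<exists>r\<le>g n. x \<in> G n r"
      using closed_good[OF assms B, of G] Gcl cov by blast
    have fl: "fst (prod_decode r) \<le> r" for r
      by (metis le_prod_encode_1 prod.collapse prod_decode_inverse)
    show "baire_bounded (range \<Psi>)" unfolding baire_bounded_def
    proof (intro exI[of _ g] ballI)
      fix f assume "f \<in> range \<Psi>"
      then obtain x where f: "f = \<Psi> x" by blast
      show "\<forall>\<^sub>F n in sequentially. f n \<le> g n"
        using g[rule_format, of x]
      proof (rule eventually_mono)
        fix n assume "\<exists>r\<le>g n. x \<in> G n r"
        then obtain r where r: "r \<le> g n" "x \<in> G n r" by blast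
        then have "f n = fst (prod_decode r)" using GA f by simp
        then show "f n \<le> g n" using fl[of r] r(1) by linarith
      qed
    qed
  qed
qed

end
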